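(* Let $d\ge3$ and $\varepsilon\in(0,1]$. Then $$P(\varepsilon,\mathcal C_d,\|\cdot\|_{L^1})\le N_{[\,]}(\varepsilon,\mathcal C_d,\|\cdot\|_{L^1})\le\frac{d^d}{d!}\Big(\frac1\varepsilon-\frac12\Big(1-\frac3d\Big)\Big)^d\le\frac{d^d}{d!}\,\varepsilon^{-d}.$$
   Context: Let $I^d=[0,1)^d$ and $\lambda^d$ be Lebesgue measure; all norms are in $L^1(I^d,\lambda^d)$. For $x\in I^d$ let $[0,x)=\prod_{i=1}^d[0,x_i)$, and let $\mathcal C_d=\{1_{[0,x)}: x\in I^d\}$ be the set of indicator functions of anchored boxes. For functions $\ell,u\in L^1$, the bracket $[\ell,u]$ is $\{f\in L^1:\ell\le f\le u\text{ pointwise}\}$; it is an $\varepsilon$-bracket if $\|u-\ell\|_{L^1}\le\varepsilon$. The bracketing number $N_{[\,]}(\varepsilon,\mathcal F,\|\cdot\|_{L^1})$ is the minimal number of $\varepsilon$-brackets whose union contains $\mathcal F$. A set $\mathcal S$ is $\varepsilon$-separated if $\|f-g\|_{L^1}>\varepsilon$ for all distinct $f,g\in\mathcal S$, and the packing number $P(\varepsilon,\mathcal F,\|\cdot\|_{L^1})$ is the maximal cardinality of an $\varepsilon$-separated subset of $\mathcal F$. *)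

theory Defs
  imports "HOL-Analysis.Analysis"
begin

text \<open>Dimension d = CARD('n); points of R^d are vectors real^'n.\<close>

definition unit_cube :: "(real^'n) set" where
  "unit_cube = {x. \<forall>i. 0 \<le> x$i \<and> x$i < 1}"

definition anchored_box :: "real^'n \<Rightarrow> (real^'n) set" where
  "anchored_box x = {y. \<forall>i. 0 \<le> y$i \<and> y$i < x$i}"

definition Cd :: "(real^'n \<Rightarrow> real) set" where
  "Cd = {indicator (anchored_box x) | x. x \<in> unit_cube}"

definition L1 :: "(real^'n \<Rightarrow> real) set" where
  "L1 = {f. integrable (lebesgue_on unit_cube) f}"

definition L1_norm :: "(real^'n \<Rightarrow> real) \<Rightarrow> real" where
  "L1_norm f = integral\<^sup>L (lebesgue_on unit_cube) (\<lambda>x. \<bar>f x\<bar>)"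

definition bracket :: "(real^'n \<Rightarrow> real) \<Rightarrow> (real^'n \<Rightarrow> real) \<Rightarrow> (real^'n \<Rightarrow> real) set" where
  "bracket l u = {f. f \<in> L1 \<and> (\<forall>x\<in>unit_cube. l x \<le> f x \<and> f x \<le> u x)}"

definition eps_bracket :: "real \<Rightarrow> (real^'n \<Rightarrow> real) \<Rightarrow> (real^'n \<Rightarrow> real) \<Rightarrow> bool" where
  "eps_bracket \<epsilon> l u \<longleftrightarrow> l \<in> L1 \<and> u \<in> L1 \<and> L1_norm (\<lambda>x. u x - l x) \<le> \<epsilon>"

text \<open>Bracketing number (value \<infinity> if no finite cover exists).\<close>
definition bracketing_number :: "real \<Rightarrow> (real^'n \<Rightarrow> real) set \<Rightarrow> ereal" where
  "bracketing_number \<epsilon> F = Inf {ereal (real (card B)) | B.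
      finite B \<and> (\<forall>(l,u)\<in>B. eps_bracket \<epsilon> l u) \<and> F \<subseteq> (\<Union>(l,u)\<in>B. bracket l u)}"

definition eps_separated :: "real \<Rightarrow> (real^'n \<Rightarrow> real) set \<Rightarrow> bool" where
  "eps_separated \<epsilon> S \<longleftrightarrow> (\<forall>f\<in>S. \<forall>g\<in>S. f \<noteq> g \<longrightarrow> L1_norm (\<lambda>x. f x - g x) > \<epsilon>)"

definition packing_number :: "real \<Rightarrow> (real^'n \<Rightarrow> real) set \<Rightarrow> ereal" where
  "packing_number \<epsilon> F = Sup {ereal (real (card S)) | S.
      finite S \<and> S \<subseteq> F \<and> eps_separated \<epsilon> S}"

end

theory Submission
  imports Defs
begin


definition upd :: "real^'n \<Rightarrow> 'n \<Rightarrow> real \<Rightarrow> real^'n" where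
  "upd v j t = (\<chi> i. if i = j then t else v$i)"

lemma prod_upd: "finite I \<Longrightarrow> j \<notin> I \<Longrightarrow> (\<Prod>i\<in>insert j I. upd v j t $ i) = t * (\<Prod>i\<in>I. v$i)"
  by (auto simp: upd_def intro!: prod.cong)

lemma cost_arith:
  fixes PA PB k c m :: real
  assumes "0 \<le> PA" "PA \<le> PB" "PB \<le> 1" "PB - PA \<le> c / k" "PA \<le> 1 - c / k" "c < k" "k + 1 \<le> m" "0 \<le> c"
  shows "(k+1)/m * PB - k/m * PA \<le> (c+1)/m" "k/m * PA \<le> 1 - (c+1)/m"
proof -
  have kp: "k > 0" using assms by linarith
  have m: "m > 0" using assms by linarith
  have 1: "k * (PB - PA) \<le> c" using assms(4) kp by (simp add: field_simps)
  have 2: "k * PA \<le> k - c" using assms(5) kp by (simp add: field_simps)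
  have "(k+1) * PB - k * PA \<le> c + 1" using 1 assms by (simp add: algebra_simps)
  then have "((k+1) * PB - k * PA)/m \<le> (c+1)/m" using m by (intro divide_right_mono) auto
  moreover have "(k+1)/m * PB - k/m * PA = ((k+1) * PB - k * PA)/m" using m by (simp add: field_simps)
  ultimately show "(k+1)/m * PB - k/m * PA \<le> (c+1)/m" by simp
  have "k * PA \<le> m - (c+1)" using 2 assms by linarith
  then show "k/m * PA \<le> 1 - (c+1)/m" using m by (simp add: field_simps)
qed

definition good :: "'n set \<Rightarrow> nat \<Rightarrow> ((real^'n) \<times> (real^'n)) set \<Rightarrow> bool" where
  "good I m B \<longleftrightarrow> finite B \<and> card B \<le> m choose card I \<and>
     (\<forall>(a,b)\<in>B. (\<forall>i\<in>I. 0 \<le> a$i \<and> a$i \<le> b$i \<and> b$i \<le> 1)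
        \<and> (\<Prod>i\<in>I. b$i) - (\<Prod>i\<in>I. a$i) \<le> real (card I) / real m
        \<and> (\<Prod>i\<in>I. a$i) \<le> 1 - real (card I) / real m) \<and>
     (\<forall>x. (\<forall>i\<in>I. 0 \<le> x$i \<and> x$i \<le> 1) \<longrightarrow> (\<exists>(a,b)\<in>B. \<forall>i\<in>I. a$i \<le> x$i \<and> x$i \<le> b$i))"

lemma cover_exists:
  fixes I :: "'n::finite set"
  shows "\<forall>m. card I \<le> m \<longrightarrow> (\<exists>B. good I m B)"
  using finite[of I]
proof (induction I rule: finite_induct)
  case empty
  show ?case
    by (intro allI impI exI[of _ "{(0,0)}"]) (auto simp: good_def)
next
  case (insert j I)
  define c where "c = card I"
  have cj: "card (insert j I) = c + 1" using insert by (simp add: c_def)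
  show ?case
  proof (intro allI impI)
    fix m assume cm: "card (insert j I) \<le> m"
    hence cm': "c + 1 \<le> m" using cj by simp
    have "\<forall>k\<in>{c..<m}. \<exists>B. good I k B" using insert.IH c_def by auto
    then obtain Bf where Bf: "\<And>k. k \<in> {c..<m} \<Longrightarrow> good I k (Bf k)" by metis
    define L where "L k = (if k = c then 0 else real k / real m)" for k
    define U where "U k = real (k+1) / real m" for k
    define B' where "B' = (\<Union>k\<in>{c..<m}. (\<lambda>(a,b). (upd a j (L k), upd b j (U k))) ` Bf k)"
    have mpos: "real m > 0" using cm' by simp
    have finB': "finite B'" unfolding B'_def using Bf by (auto simp: good_def)
    have "card B' \<le> (\<Sum>k\<in>{c..<m}. card ((\<lambda>(a,b). (upd a j (L k), upd b j (U k))) ` Bf k))"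
      unfolding B'_def by (rule card_UN_le) simp
    also have "\<dots> \<le> (\<Sum>k\<in>{c..<m}. k choose c)"
    proof (rule sum_mono)
      fix k assume k: "k \<in> {c..<m}"
      have "card ((\<lambda>(a,b). (upd a j (L k), upd b j (U k))) ` Bf k) \<le> card (Bf k)"
        using Bf[OF k] by (intro card_image_le) (auto simp: good_def)
      also have "\<dots> \<le> k choose c" using Bf[OF k] by (auto simp: good_def c_def)
      finally show "card ((\<lambda>(a,b). (upd a j (L k), upd b j (U k))) ` Bf k) \<le> k choose c" .
    qed
    also have "\<dots> \<le> (\<Sum>k\<le>m-1. k choose c)"
      by (rule sum_mono2) auto
    also have "\<dots> = m choose (c+1)"
      using sum_choose_upper[of c "m-1"] cm' by simp
    finally have cardB': "card B' \<le> m choose card (insert j I)" using cj by simp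
    have props: "(\<forall>i\<in>insert j I. 0 \<le> a'$i \<and> a'$i \<le> b'$i \<and> b'$i \<le> 1)
        \<and> (\<Prod>i\<in>insert j I. b'$i) - (\<Prod>i\<in>insert j I. a'$i) \<le> real (card (insert j I)) / real m
        \<and> (\<Prod>i\<in>insert j I. a'$i) \<le> 1 - real (card (insert j I)) / real m"
      if ab': "(a',b') \<in> B'" for a' b'
    proof -
      from ab' obtain k a b where k: "k \<in> {c..<m}" and ab: "(a,b) \<in> Bf k"
        and eq: "a' = upd a j (L k)" "b' = upd b j (U k)"
        unfolding B'_def by auto
      have g: "good I k (Bf k)" using Bf[OF k] .
      have comp: "\<forall>i\<in>I. 0 \<le> a$i \<and> a$i \<le> b$i \<and> b$i \<le> 1"
        and cost: "(\<Prod>i\<in>I. b$i) - (\<Prod>i\<in>I. a$i) \<le> real c / real k"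
        and low: "(\<Prod>i\<in>I. a$i) \<le> 1 - real c / real k"
        using g ab unfolding good_def c_def by auto
      define PA where "PA = (\<Prod>i\<in>I. a$i)"
      define PB where "PB = (\<Prod>i\<in>I. b$i)"
      have PA0: "0 \<le> PA" unfolding PA_def using comp by (intro prod_nonneg) auto
      have PAB: "PA \<le> PB" unfolding PA_def PB_def using comp by (intro prod_mono) auto
      have PB1: "PB \<le> 1" unfolding PB_def using comp by (intro prod_le_1) auto
      have kc: "c \<le> k" "k + 1 \<le> m" using k by auto
      have LU: "0 \<le> L k" "L k \<le> U k" "U k \<le> 1"
        using kc mpos by (auto simp: L_def U_def divide_right_mono)
      have pa': "(\<Prod>i\<in>insert j I. a'$i) = L k * PA"
        unfolding eq PA_def by (rule prod_upd[OF insert(1,2)])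
      have pb': "(\<Prod>i\<in>insert j I. b'$i) = U k * PB"
        unfolding eq PB_def by (rule prod_upd[OF insert(1,2)])
      have c1: "U k * PB - L k * PA \<le> real (c+1) / real m \<and> L k * PA \<le> 1 - real (c+1) / real m"
      proof (cases "k = c")
        case True
        have "U k * PB \<le> U k" using PB1 LU by (simp add: mult_left_le)
        moreover have "1 - real (c+1) / real m \<ge> 0" using cm' mpos by (simp add: field_simps)
        ultimately show ?thesis using True by (simp add: L_def U_def)
      next
        case False
        hence kc': "real c < real k" using kc by simp
        have kk: "real k + 1 \<le> real m" using kc by simp
        have "(real k+1)/m * PB - real k/m * PA \<le> (real c+1)/m" "real k/m * PA \<le> 1 - (real c+1)/m"
          using cost_arith[OF PA0 PAB PB1 cost[folded PA_def PB_def] low[folded PA_def] kc' kk] by auto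
        then show ?thesis using False by (simp add: L_def U_def add.commute)
      qed
      show ?thesis
      proof (intro conjI)
        show "\<forall>i\<in>insert j I. 0 \<le> a'$i \<and> a'$i \<le> b'$i \<and> b'$i \<le> 1"
          using comp LU insert(2) by (auto simp: eq upd_def)
        show "(\<Prod>i\<in>insert j I. b'$i) - (\<Prod>i\<in>insert j I. a'$i) \<le> real (card (insert j I)) / real m"
          using c1 pa' pb' cj by simp
        show "(\<Prod>i\<in>insert j I. a'$i) \<le> 1 - real (card (insert j I)) / real m"
          using c1 pa' cj by simp
      qed
    qed
    have covers: "\<exists>(a,b)\<in>B'. \<forall>i\<in>insert j I. a$i \<le> x$i \<and> x$i \<le> b$i"
      if x: "\<forall>i\<in>insert j I. 0 \<le> x$i \<and> x$i \<le> 1" for x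
    proof -
      have xj: "0 \<le> x$j" "x$j \<le> 1" using x by auto
      obtain k where k: "k \<in> {c..<m}" "L k \<le> x$j" "x$j \<le> U k"
      proof (cases "x$j \<le> real (c+1) / real m")
        case True
        show ?thesis using that[of c] True xj cm' by (auto simp: L_def U_def)
      next
        case False
        define k where "k = min (m-1) (nat \<lfloor>x$j * m\<rfloor>)"
        have fl: "real (nat \<lfloor>x$j * m\<rfloor>) \<le> x$j * m" "x$j * m < real (nat \<lfloor>x$j * m\<rfloor>) + 1"
          using xj mpos by (auto simp: of_nat_nat)
        have "real c + 1 < x$j * m" using False mpos by (simp add: field_simps)
        hence "c + 1 \<le> nat \<lfloor>x$j * m\<rfloor>" using fl by linarith
        moreover have "x$j * m \<le> m" using xj mpos by (simp add: mult_left_le_one_le)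
        ultimately have "real c + 1 < real m" using \<open>real c + 1 < x$j * m\<close> by linarith
        hence "c + 1 < m" by linarith
        hence kc: "c < k" "k < m" using \<open>c + 1 \<le> nat \<lfloor>x$j * m\<rfloor>\<close> by (auto simp: k_def)
        have "real k \<le> x$j * m" using fl by (auto simp: k_def)
        hence Lk: "L k \<le> x$j" using kc mpos by (simp add: L_def field_simps)
        have "x$j * m \<le> real k + 1"
        proof (cases "k = m - 1")
          case True thus ?thesis using xj mpos cm' by (simp add: of_nat_diff)
        next
          case False thus ?thesis using fl by (auto simp: k_def min_def split: if_splits)
        qed
        hence "x$j \<le> U k" using mpos by (simp add: U_def field_simps)
        then show ?thesis using that[of k] kc Lk by auto
      qed
      obtain a b where ab: "(a,b) \<in> Bf k" and cov: "\<forall>i\<in>I. a$i \<le> x$i \<and> x$i \<le> b$i"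
      proof -
        have cl: "\<forall>x. (\<forall>i\<in>I. 0 \<le> x$i \<and> x$i \<le> 1) \<longrightarrow> (\<exists>(a,b)\<in>Bf k. \<forall>i\<in>I. a$i \<le> x$i \<and> x$i \<le> b$i)"
          using Bf[OF k(1)] unfolding good_def by blast
        have "\<forall>i\<in>I. 0 \<le> x$i \<and> x$i \<le> 1" using x by simp
        with cl have "\<exists>(a,b)\<in>Bf k. \<forall>i\<in>I. a$i \<le> x$i \<and> x$i \<le> b$i" by blast
        then show ?thesis using that by blast
      qed
      show ?thesis
        using ab cov k unfolding B'_def
        by (intro bexI[of _ "(upd a j (L k), upd b j (U k))"]) (auto simp: upd_def)
    qed
    show "\<exists>B. good (insert j I) m B"
      using finB' cardB' props covers unfolding good_def by blast
  qed
qed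



lemma ab_eq: "anchored_box x = (\<Inter>i. {y::real^'n. y$i \<ge> 0} \<inter> {y. y$i < x$i})"
  by (auto simp: anchored_box_def)

lemma ab_sets: "anchored_box (x::real^'n) \<in> sets lebesgue"
proof -
  have "anchored_box x \<in> sets borel"
    unfolding ab_eq
    by (intro sets.finite_INT sets.Int borel_closed borel_open
        closed_halfspace_component_ge_cart open_halfspace_component_lt_cart) auto
  then show ?thesis by (simp add: sets_completionI_sets)
qed

lemma ab_bounded: "bounded (anchored_box (x::real^'n))"
  by (rule bounded_subset[OF bounded_cbox[of 0 x]]) (auto simp: anchored_box_def mem_box_cart less_imp_le)

lemma cube_eq: "unit_cube = anchored_box (1::real^'n)"
  by (auto simp: unit_cube_def anchored_box_def)

lemma cube_lmeas: "(unit_cube::(real^'n) set) \<in> lmeasurable"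
  unfolding cube_eq using ab_sets ab_bounded by (intro bounded_set_imp_lmeasurable) auto

lemma int_ind:
  assumes "A \<in> sets lebesgue"
  shows "integrable (lebesgue_on (unit_cube::(real^'n) set)) (indicator A :: _ \<Rightarrow> real)"
proof -
  interpret finite_measure "lebesgue_on (unit_cube::(real^'n) set)"
    by (rule finite_measure_lebesgue_on[OF cube_lmeas])
  show ?thesis
  proof (rule integrable_const_bound[where B=1])
    show "AE x in lebesgue_on unit_cube. norm (indicator A x :: real) \<le> 1"
      by (auto simp: indicator_def)
    show "(indicator A :: _ \<Rightarrow> real) \<in> borel_measurable (lebesgue_on unit_cube)"
      using assms by (intro measurable_restrict_space1) auto
  qed
qed

lemma content_box_cart0:
  assumes "\<forall>i. 0 \<le> (a::real^'n)$i"
  shows "measure lebesgue (box 0 a) = (\<Prod>i\<in>UNIV. a$i)" "measure lebesgue (cbox 0 a) = (\<Prod>i\<in>UNIV. a$i)"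
proof -
  have "0 \<in> cbox 0 a" using assms by (simp add: mem_box_cart)
  hence ne: "cbox 0 a \<noteq> {}" by blast
  have "measure lborel (box 0 a) = measure lborel (cbox 0 a)"
    by (simp only: measure_lborel_box_eq measure_lborel_cbox_eq)
  moreover have "measure lborel (cbox 0 a) = (\<Prod>i\<in>UNIV. a$i)"
    using content_cbox_cart[OF ne] by simp
  ultimately show "measure lebesgue (box 0 a) = (\<Prod>i\<in>UNIV. a$i)" "measure lebesgue (cbox 0 a) = (\<Prod>i\<in>UNIV. a$i)"
    by simp_all
qed

lemma L1_bound:
  assumes "\<forall>i. 0 \<le> (a::real^'n)$i \<and> a$i \<le> b$i"
  shows "L1_norm (\<lambda>y. indicator (cbox 0 b) y - indicator (box 0 a) y) \<le> (\<Prod>i\<in>UNIV. b$i) - (\<Prod>i\<in>UNIV. a$i)"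
proof -
  define D where "D = cbox 0 b - box 0 a"
  have sub: "box 0 a \<subseteq> cbox 0 b" using assms by (auto simp: mem_box_cart) (meson less_eq_real_def order_trans)+
  have eq: "(\<lambda>y. \<bar>indicator (cbox 0 b) y - indicator (box 0 a) y\<bar>) = (indicator D :: _ \<Rightarrow> real)"
    using sub by (auto simp: D_def indicator_def fun_eq_iff)
  have cs: "unit_cube \<in> sets lebesgue" using cube_lmeas by auto
  have Df: "D \<in> fmeasurable lebesgue" unfolding D_def by (intro fmeasurable_Diff) auto
  have "L1_norm (\<lambda>y. indicator (cbox 0 b) y - indicator (box 0 a) y) = measure (lebesgue_on unit_cube) (D \<inter> unit_cube)"
    unfolding L1_norm_def eq by (simp add: space_restrict_space)
  also have "\<dots> = measure lebesgue (D \<inter> unit_cube)"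
    by (rule measure_restrict_space) (use cs in auto)
  also have "\<dots> \<le> measure lebesgue D"
    using Df cs by (intro measure_mono_fmeasurable) auto
  also have "\<dots> = measure lebesgue (cbox 0 b) - measure lebesgue (box 0 a)"
    unfolding D_def using sub lmeasurable_cbox[of 0 b] lmeasurable_box[of 0 a] by (intro measure_Diff) (auto simp: fmeasurable_def simp del: emeasure_completion)
  also have "\<dots> = (\<Prod>i\<in>UNIV. b$i) - (\<Prod>i\<in>UNIV. a$i)"
    using content_box_cart0[of a] content_box_cart0[of b] assms by (metis order_trans)
  finally show ?thesis .
qed



lemma sum_nat_real: "(\<Sum>i<d. real i) = real d * (real d - 1) / 2"
  by (induction d) (auto simp: field_simps)

lemma amgm_prod:
  fixes x :: "nat \<Rightarrow> real"
  assumes "d > 0" "\<And>i. i < d \<Longrightarrow> x i \<ge> 0"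
  shows "(\<Prod>i<d. x i) \<le> ((\<Sum>i<d. x i) / d) ^ d"
proof -
  define P where "P = (\<Prod>i<d. x i)"
  have P0: "P \<ge> 0" unfolding P_def using assms by (intro prod_nonneg) auto
  have am: "(\<Sum>i<d. x i / card {..<d}) \<ge> P powr (1 / card {..<d})"
    unfolding P_def using assms by (intro arith_geom_mean) auto
  hence am': "(\<Sum>i<d. x i) / d \<ge> P powr (1 / d)" by (simp add: sum_divide_distrib)
  show ?thesis
  proof (cases "P = 0")
    case True
    have "(\<Sum>i<d. x i) / d \<ge> 0" using assms by (intro divide_nonneg_pos sum_nonneg) auto
    thus ?thesis unfolding P_def[symmetric] using True by (simp add: zero_le_power)
  next
    case False
    hence Pp: "P > 0" using P0 by simp
    have "P = (P powr (1/d)) ^ d"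
      using Pp assms(1) by (simp add: powr_realpow[symmetric] powr_powr)
    also have "\<dots> \<le> ((\<Sum>i<d. x i) / d) ^ d"
      using am' by (intro power_mono) auto
    finally show ?thesis unfolding P_def .
  qed
qed

lemma choose_bound:
  fixes d m :: nat and \<epsilon> :: real
  assumes d: "d > 0" and e: "0 < \<epsilon>" "\<epsilon> \<le> 1" and m: "m = nat \<lceil>real d / \<epsilon>\<rceil>"
  shows "real (m choose d) \<le> real d ^ d / fact d * (1 / \<epsilon> - 1/2 * (1 - 3 / real d)) ^ d"
    and "d \<le> m" and "real d / real m \<le> \<epsilon>"
proof -
  have dle: "real d \<le> real d / \<epsilon>" using e d by (simp add: field_simps)
  have mge: "real d / \<epsilon> \<le> real m" using m by linarith
  have mlt: "real m < real d / \<epsilon> + 1" using m dle by linarith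
  show dm: "d \<le> m" using dle mge by linarith
  show "real d / real m \<le> \<epsilon>"
    using mge e d dm by (simp add: field_simps)
  define X where "X = 1 / \<epsilon> - 1/2 * (1 - 3 / real d)"
  have ch: "real (m choose d) = (\<Prod>i<d. real m - real i) / fact d"
    by (simp add: binomial_gbinomial gbinomial_prod_rev atLeast0LessThan)
  have P: "(\<Prod>i<d. real m - real i) \<le> ((\<Sum>i<d. real m - real i) / d) ^ d"
    using dm d by (intro amgm_prod) auto
  have mean: "(\<Sum>i<d. real m - real i) / d = real m - (real d - 1) / 2"
    using d by (simp add: sum_subtractf sum_nat_real field_simps)
  have mX: "real m - (real d - 1) / 2 \<le> real d * X"
  proof -
    have "real d * X = real d / \<epsilon> - real d / 2 + 3 / 2" using d unfolding X_def by (simp add: field_simps)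
    moreover have "real m - (real d - 1) / 2 = real m - real d / 2 + 1/2" by (simp add: field_simps)
    ultimately show ?thesis using mlt by linarith
  qed
  have m0: "0 \<le> real m - (real d - 1) / 2" using dm by simp
  have "(\<Prod>i<d. real m - real i) \<le> (real d * X) ^ d"
    using P mean mX m0 by (metis power_mono order_trans)
  hence "real (m choose d) \<le> (real d * X) ^ d / fact d"
    unfolding ch by (intro divide_right_mono) auto
  thus "real (m choose d) \<le> real d ^ d / fact d * (1 / \<epsilon> - 1/2 * (1 - 3 / real d)) ^ d"
    unfolding X_def by (simp add: power_mult_distrib)
qed



lemma bracket_close:
  fixes f g l u :: "real^'n::finite \<Rightarrow> real"
  assumes "f \<in> bracket l u" "g \<in> bracket l u" "eps_bracket \<epsilon> l u"
  shows "L1_norm (\<lambda>x. f x - g x) \<le> \<epsilon>"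
proof -
  have fi: "f \<in> L1" "g \<in> L1" "l \<in> L1" "u \<in> L1" and bd: "L1_norm (\<lambda>x. u x - l x) \<le> \<epsilon>"
    and pw: "\<forall>x\<in>unit_cube. l x \<le> f x \<and> f x \<le> u x" "\<forall>x\<in>unit_cube. l x \<le> g x \<and> g x \<le> u x"
    using assms by (auto simp: bracket_def eps_bracket_def)
  have "L1_norm (\<lambda>x. f x - g x) \<le> L1_norm (\<lambda>x. u x - l x)"
    unfolding L1_norm_def
  proof (rule integral_mono)
    show "integrable (lebesgue_on unit_cube) (\<lambda>x. \<bar>f x - g x\<bar>)"
      using fi by (intro integrable_abs integrable_diff) (auto simp: L1_def)
    show "integrable (lebesgue_on unit_cube) (\<lambda>x. \<bar>u x - l x\<bar>)"
      using fi by (intro integrable_abs integrable_diff) (auto simp: L1_def)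
    fix x :: "real^'n" assume "x \<in> space (lebesgue_on unit_cube)"
    hence "x \<in> unit_cube" by (simp add: space_restrict_space)
    thus "\<bar>f x - g x\<bar> \<le> \<bar>u x - l x\<bar>" using pw by fastforce
  qed
  thus ?thesis using bd by simp
qed

lemma card_sep_le:
  assumes S: "finite S" "S \<subseteq> F" "eps_separated \<epsilon> S"
    and B: "finite B" "\<forall>(l,u)\<in>B. eps_bracket \<epsilon> l u" "F \<subseteq> (\<Union>(l,u)\<in>B. bracket l u)"
  shows "card S \<le> card B"
proof -
  have "\<forall>f\<in>S. \<exists>p\<in>B. f \<in> bracket (fst p) (snd p)"
  proof
    fix f assume "f \<in> S"
    then obtain l u where "(l,u) \<in> B" "f \<in> bracket l u" using S(2) B(3) by blast
    thus "\<exists>p\<in>B. f \<in> bracket (fst p) (snd p)" by force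
  qed
  then obtain g where g: "\<And>f. f \<in> S \<Longrightarrow> g f \<in> B \<and> f \<in> bracket (fst (g f)) (snd (g f))" by metis
  have inj: "inj_on g S"
  proof (rule inj_onI, rule ccontr)
    fix f f' assume f: "f \<in> S" "f' \<in> S" "g f = g f'" "f \<noteq> f'"
    have eb: "eps_bracket \<epsilon> (fst (g f)) (snd (g f))" using g[OF f(1)] B(2) by auto
    have "L1_norm (\<lambda>x. f x - f' x) \<le> \<epsilon>"
      using bracket_close[OF _ _ eb] g[OF f(1)] g[OF f(2)] f(3) by auto
    moreover have "L1_norm (\<lambda>x. f x - f' x) > \<epsilon>" using S(3) f unfolding eps_separated_def by blast
    ultimately show False by simp
  qed
  have "card S = card (g ` S)" using inj by (simp add: card_image)
  also have "\<dots> \<le> card B" using g B(1) by (intro card_mono) auto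
  finally show ?thesis .
qed

lemma pack_le_brack: "packing_number \<epsilon> F \<le> bracketing_number \<epsilon> F"
  unfolding packing_number_def bracketing_number_def
proof (rule Sup_least)
  fix s assume "s \<in> {ereal (real (card S)) | S. finite S \<and> S \<subseteq> F \<and> eps_separated \<epsilon> S}"
  then obtain S where s: "s = ereal (real (card S))" "finite S" "S \<subseteq> F" "eps_separated \<epsilon> S" by blast
  show "s \<le> Inf {ereal (real (card B)) | B.
      finite B \<and> (\<forall>(l,u)\<in>B. eps_bracket \<epsilon> l u) \<and> F \<subseteq> (\<Union>(l,u)\<in>B. bracket l u)}"
  proof (rule Inf_greatest)
    fix t assume "t \<in> {ereal (real (card B)) | B.
      finite B \<and> (\<forall>(l,u)\<in>B. eps_bracket \<epsilon> l u) \<and> F \<subseteq> (\<Union>(l,u)\<in>B. bracket l u)}"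
    then obtain B where t: "t = ereal (real (card B))" "finite B" "\<forall>(l,u)\<in>B. eps_bracket \<epsilon> l u"
      "F \<subseteq> (\<Union>(l,u)\<in>B. bracket l u)" by blast
    have "card S \<le> card B" by (rule card_sep_le[OF s(2-4) t(2-4)])
    thus "s \<le> t" using s(1) t(1) by simp
  qed
qed



lemma ind_sub_le: "A \<subseteq> B \<Longrightarrow> (indicator A y :: real) \<le> indicator B y"
  by (auto simp: indicator_def)

lemma brack_bound:
  fixes \<epsilon> :: real
  assumes "0 < \<epsilon>" "\<epsilon> \<le> 1"
  defines "d \<equiv> CARD('n::finite)"
  shows "bracketing_number \<epsilon> (Cd :: (real^'n \<Rightarrow> real) set)
           \<le> ereal (real d ^ d / fact d * (1 / \<epsilon> - 1/2 * (1 - 3 / real d)) ^ d)"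
proof -
  define m where "m = nat \<lceil>real d / \<epsilon>\<rceil>"
  have d0: "d > 0" unfolding d_def by simp
  note cb = choose_bound[OF d0 assms(1,2) m_def]
  have "card (UNIV::'n set) \<le> m" using cb(2) d_def by simp
  then obtain B :: "((real^'n) \<times> (real^'n)) set" where g: "good UNIV m B"
    using cover_exists[of "UNIV::'n set"] by blast
  have finB: "finite B" and cardB: "card B \<le> m choose d"
    and props: "\<forall>(a,b)\<in>B. (\<forall>i. 0 \<le> a$i \<and> a$i \<le> b$i \<and> b$i \<le> 1)
        \<and> (\<Prod>i\<in>UNIV. b$i) - (\<Prod>i\<in>UNIV. a$i) \<le> real d / real m"
    and cov: "\<forall>x. (\<forall>i. 0 \<le> x$i \<and> x$i \<le> 1) \<longrightarrow> (\<exists>(a,b)\<in>B. \<forall>i. a$i \<le> x$i \<and> x$i \<le> b$i)"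
    using g unfolding good_def d_def by auto
  define BR where "BR = (\<lambda>(a,b). (indicator (box 0 a) :: real^'n \<Rightarrow> real, indicator (cbox 0 b) :: real^'n \<Rightarrow> real)) ` B"
  have finBR: "finite BR" unfolding BR_def using finB by simp
  have cardBR: "card BR \<le> m choose d"
    unfolding BR_def using card_image_le[OF finB] cardB le_trans by blast
  have ebr: "\<forall>(l,u)\<in>BR. eps_bracket \<epsilon> l u"
  proof (clarsimp simp: BR_def)
    fix a b :: "real^'n" assume ab: "(a,b) \<in> B"
    have c: "\<forall>i. 0 \<le> a$i \<and> a$i \<le> b$i" and cost: "(\<Prod>i\<in>UNIV. b$i) - (\<Prod>i\<in>UNIV. a$i) \<le> real d / real m"
      using props ab by auto
    have "L1_norm (\<lambda>y. indicator (cbox 0 b) y - indicator (box 0 a) y) \<le> \<epsilon>"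
      using L1_bound[OF c] cost cb(3) by linarith
    moreover have "(indicator (box 0 a) :: real^'n \<Rightarrow> real) \<in> L1" "(indicator (cbox 0 b) :: real^'n \<Rightarrow> real) \<in> L1"
      unfolding L1_def by (auto intro!: int_ind)
    ultimately show "eps_bracket \<epsilon> (indicator (box 0 a)) (indicator (cbox 0 b))"
      unfolding eps_bracket_def by auto
  qed
  have covBR: "(Cd :: (real^'n \<Rightarrow> real) set) \<subseteq> (\<Union>(l,u)\<in>BR. bracket l u)"
  proof
    fix f :: "real^'n \<Rightarrow> real" assume "f \<in> Cd"
    then obtain x where f: "f = indicator (anchored_box x)" and x: "x \<in> unit_cube" unfolding Cd_def by blast
    have "\<forall>i. 0 \<le> x$i \<and> x$i \<le> 1" using x by (auto simp: unit_cube_def less_imp_le)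
    then obtain a b where ab: "(a,b) \<in> B" and le: "\<forall>i. a$i \<le> x$i \<and> x$i \<le> b$i" using cov by blast
    have s1: "box 0 a \<subseteq> anchored_box x" using le
      by (auto simp: mem_box_cart anchored_box_def) (meson less_eq_real_def order_trans less_le_trans)+
    have s2: "anchored_box x \<subseteq> cbox 0 b" using le
      by (auto simp: mem_box_cart anchored_box_def) (meson less_eq_real_def order_trans less_le_trans)+
    have "f \<in> bracket (indicator (box 0 a)) (indicator (cbox 0 b))"
      unfolding bracket_def L1_def f using s1 s2 ab_sets[of x]
      by (auto intro!: int_ind ind_sub_le)
    thus "f \<in> (\<Union>(l,u)\<in>BR. bracket l u)" unfolding BR_def using ab by force
  qed
  have "bracketing_number \<epsilon> (Cd :: (real^'n \<Rightarrow> real) set) \<le> ereal (real (card BR))"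
    unfolding bracketing_number_def using finBR ebr covBR by (intro Inf_lower) blast
  also have "\<dots> \<le> ereal (real (m choose d))" using cardBR by simp
  also have "\<dots> \<le> ereal (real d ^ d / fact d * (1 / \<epsilon> - 1/2 * (1 - 3 / real d)) ^ d)"
    using cb(1) by simp
  finally show ?thesis .
qed

lemma last_part:
  fixes \<epsilon> :: real and d :: nat
  assumes "d \<ge> 3" "0 < \<epsilon>" "\<epsilon> \<le> 1"
  shows "real d ^ d / fact d * (1 / \<epsilon> - 1/2 * (1 - 3 / real d)) ^ d
           \<le> real d ^ d / fact d * \<epsilon> powr (- real d)"
proof -
  have c0: "0 \<le> 1/2 * (1 - 3 / real d)" using assms by (simp add: field_simps)
  have c1: "1/2 * (1 - 3 / real d) \<le> 1/2" using assms by simp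
  have "1 \<le> 1 / \<epsilon>" using assms by simp
  hence b0: "0 \<le> 1 / \<epsilon> - 1/2 * (1 - 3 / real d)" using c1 by linarith
  have "(1 / \<epsilon> - 1/2 * (1 - 3 / real d)) ^ d \<le> (1 / \<epsilon>) ^ d"
    using b0 c0 by (intro power_mono) auto
  also have "(1 / \<epsilon>) ^ d = \<epsilon> powr (- real d)"
    using assms by (simp add: powr_minus powr_realpow power_one_over inverse_eq_divide)
  finally show ?thesis by (intro mult_left_mono) auto
qed

theorem mainTheorem5:
  fixes \<epsilon> :: real
  assumes "CARD('n::finite) \<ge> 3" and "0 < \<epsilon>" and "\<epsilon> \<le> 1"
  defines "d \<equiv> CARD('n)"
  shows "packing_number \<epsilon> (Cd :: (real^'n \<Rightarrow> real) set)
           \<le> bracketing_number \<epsilon> (Cd :: (real^'n \<Rightarrow> real) set)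
       \<and> bracketing_number \<epsilon> (Cd :: (real^'n \<Rightarrow> real) set)
           \<le> ereal (real d ^ d / fact d * (1 / \<epsilon> - 1/2 * (1 - 3 / real d)) ^ d)
       \<and> real d ^ d / fact d * (1 / \<epsilon> - 1/2 * (1 - 3 / real d)) ^ d
           \<le> real d ^ d / fact d * \<epsilon> powr (- real d)"
  using pack_le_brack brack_bound[OF assms(2,3)] last_part[OF assms(1-3)] unfolding d_def by blast


end
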